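(* Setting: integers $N,Q,S\ge1$, $1\le M\le N$, $J\ge1$; $\mathbf{H}\in\mathbb{R}^{Q\times N}\setminus\{\mathbf{0}\}$, $\mathbf{y}\in\mathbb{R}^Q$, a real matrix $\mathbf{V}_0$ with $N$ columns, and for $s\in\{1,\dots,S\}$: $P_s\ge1$, $\mathbf{V}_s\in\mathbb{R}^{P_s\times N}$, $\mathbf{c}_s\in\mathbb{R}^{P_s}$; $\Phi:\mathbb{R}^Q\to\mathbb{R}$; a fixed $\delta>0$ and functions $\psi_{s,\delta}:\mathbb{R}\to\mathbb{R}$; $F_\delta(\mathbf{x})=\Phi(\mathbf{H}\mathbf{x}-\mathbf{y})+\sum_{s=1}^S\psi_{s,\delta}(\|\mathbf{V}_s\mathbf{x}-\mathbf{c}_s\|)+\|\mathbf{V}_0\mathbf{x}\|^2$. Assume: (A3i) $\Phi$ is differentiable with $L$-Lipschitz gradient; (A3ii) each $\psi_{s,\delta}$ is differentiable; (A3iii) each $t\mapsto\psi_{s,\delta}(\sqrt t)$ is concave on $[0,+\infty)$; (A3iv) for each $s$ there is $\overline\omega_s\in[0,+\infty)$ with $0\le\dot\psi_{s,\delta}(t)\le\overline\omega_s t$ for all $t>0$, and $\lim_{t\to0}\dot\psi_{s,\delta}(t)/t\in\mathbb{R}$. Let $\omega_{s,\delta}(t)=\dot\psi_{s,\delta}(t)/t$, extended by continuity at $0$, fix $\mu\in[L,+\infty)$ and set, for $\mathbf{x}\in\mathbb{R}^N$, $\mathbf{A}(\mathbf{x})=\mu\mathbf{H}^\top\mathbf{H}+2\mathbf{V}_0^\top\mathbf{V}_0+\mathbf{V}^\top\operatorname{Diag}\{\mathbf{b}(\mathbf{x})\}\mathbf{V}$,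 where $\mathbf{V}=[\mathbf{V}_1^\top|\cdots|\mathbf{V}_S^\top]^\top$ and $\mathbf{b}(\mathbf{x})$ has entry $b_{P_1+\dots+P_{s-1}+p}(\mathbf{x})=\omega_{s,\delta}(\|\mathbf{V}_s\mathbf{x}-\mathbf{c}_s\|)$ for $p\in\{1,\dots,P_s\}$. Consider the iteration: $\mathbf{x}_0\in\mathbb{R}^N$; for each $k\in\mathbb{N}$, given a matrix $\mathbf{D}_k\in\mathbb{R}^{N\times M}$, set $\mathbf{u}_k^0=\mathbf{0}$ and for $j=1,\dots,J$: $\mathbf{B}_k^{j-1}=\mathbf{D}_k^\top\mathbf{A}(\mathbf{x}_k+\mathbf{D}_k\mathbf{u}_k^{j-1})\mathbf{D}_k$, $\mathbf{u}_k^j=\mathbf{u}_k^{j-1}-(\mathbf{B}_k^{j-1})^{\dagger}\mathbf{D}_k^\top\nabla F_\delta(\mathbf{x}_k+\mathbf{D}_k\mathbf{u}_k^{j-1})$ (with $\dagger$ the Moore–Penrose pseudo-inverse); then $\mathbf{x}_{k+1}=\mathbf{x}_k+\mathbf{D}_k\mathbf{u}_k^J$. Write $\mathbf{x}_k^j=\mathbf{x}_k+\mathbf{D}_k\mathbf{u}_k^j$ and $\mathbf{g}_k=\nabla F_\delta(\mathbf{x}_k)$. Assume further (A4) there exist $\gamma_0>0,\gamma_1>0$ such that for every $k$ the first column $\mathbf{d}_k^1$ of $\mathbf{D}_k$ satisfies $\mathbf{g}_k^\top\mathbf{d}_k^1\le-\gamma_0\|\mathbf{g}_k\|^2$ and $\|\mathbf{d}_k^1\|\le\gamma_1\|\mathbf{g}_k\|$.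 Claim: there exists a constant $\nu>0$ such that for every $k\in\mathbb{N}$ and every $j\in\{1,\dots,J\}$, $$F_\delta(\mathbf{x}_k)-F_\delta(\mathbf{x}_k^j)\ge\frac{\gamma_0^2}{\gamma_1}\nu^{-1}\|\mathbf{g}_k\|^2.$$
   Context: $\|\cdot\|$ is the Euclidean norm; $\dot\psi_{s,\delta}$ is the derivative of $\psi_{s,\delta}$. *)

theory Defs
  imports "HOL-Analysis.Analysis"
begin

definition grad :: "('a::euclidean_space \<Rightarrow> real) \<Rightarrow> 'a \<Rightarrow> 'a" where
  "grad f x = (THE g. (f has_derivative (\<lambda>h. g \<bullet> h)) (at x))"

definition pinv :: "real^'b^'a \<Rightarrow> real^'a^'b" where
  "pinv A = (THE X. A ** X ** A = A \<and> X ** A ** X = X \<and>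
                    transpose (A ** X) = A ** X \<and> transpose (X ** A) = X ** A)"

definition diagm :: "real^'p \<Rightarrow> real^'p^'p" where
  "diagm b = (\<chi> i j. if i = j then b $ i else 0)"

text \<open>The stacked matrix V has row index type 'p; grp i = s means row i belongs to
  block V_s.  blk_norm grp s z is the Euclidean norm of the s-th block of z.\<close>
definition blk_norm :: "('p::finite \<Rightarrow> nat) \<Rightarrow> nat \<Rightarrow> real^'p \<Rightarrow> real" where
  "blk_norm grp s z = sqrt (\<Sum>i\<in>{i. grp i = s}. (z $ i)^2)"

definition Fdelta ::
  "(real^'q \<Rightarrow> real) \<Rightarrow> real^'n^'q \<Rightarrow> real^'q \<Rightarrow> (nat \<Rightarrow> real \<Rightarrow> real) \<Rightarrow> nat
   \<Rightarrow> ('p::finite \<Rightarrow> nat) \<Rightarrow> real^'n^'p \<Rightarrow> real^'p \<Rightarrow> real^'n^'r \<Rightarrow> real^'n \<Rightarrow> real" where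
  "Fdelta \<Phi> H y \<psi> S grp V c V0 x =
     \<Phi> (H *v x - y) + (\<Sum>s=1..S. \<psi> s (blk_norm grp s (V *v x - c))) + (norm (V0 *v x))^2"

definition omega :: "(nat \<Rightarrow> real \<Rightarrow> real) \<Rightarrow> nat \<Rightarrow> real \<Rightarrow> real" where
  "omega \<psi> s t = (if t = 0 then Lim (at 0) (\<lambda>t. deriv (\<psi> s) t / t) else deriv (\<psi> s) t / t)"

definition Amat ::
  "real \<Rightarrow> real^'n^'q \<Rightarrow> real^'n^'r \<Rightarrow> (nat \<Rightarrow> real \<Rightarrow> real) \<Rightarrow> ('p::finite \<Rightarrow> nat)
   \<Rightarrow> real^'n^'p \<Rightarrow> real^'p \<Rightarrow> real^'n \<Rightarrow> real^'n^'n" where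
  "Amat \<mu> H V0 \<psi> grp V c x =
     \<mu> *\<^sub>R (transpose H ** H) + 2 *\<^sub>R (transpose V0 ** V0)
     + transpose V ** diagm (\<chi> i. omega \<psi> (grp i) (blk_norm grp (grp i) (V *v x - c))) ** V"

end

theory Submission
  imports Defs
begin


declare transpose_matrix_vector[simp del]

lemma tmv_inner: "(transpose M *v a) \<bullet> w = a \<bullet> ((M::real^'n^'m) *v w)"
  by (simp add: dot_lmul_matrix transpose_matrix_vector)

lemma mv_inner: "((M::real^'n^'m) *v v) \<bullet> w = v \<bullet> (transpose M *v w)"
  by (metis inner_commute tmv_inner)

lemma sym_matI:
  fixes M :: "real^'n^'n"
  assumes "\<And>v w. (M *v v) \<bullet> w = v \<bullet> (M *v w)"
  shows "transpose M = M"
proof -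
  have "transpose M *v w = M *v w" for w
  proof -
    have e: "v \<bullet> (transpose M *v w) = v \<bullet> (M *v w)" for v
      by (metis assms mv_inner)
    have "\<And>v. v \<bullet> (transpose M *v w - M *v w) = 0"
      using e by (simp add: inner_diff_right)
    from this[of "transpose M *v w - M *v w"] show ?thesis by simp
  qed
  then show ?thesis by (simp add: matrix_eq)
qed

lemma sym_matD:
  fixes M :: "real^'n^'n"
  assumes "transpose M = M"
  shows "(M *v v) \<bullet> w = v \<bullet> (M *v w)"
  by (metis assms mv_inner)

definition MP :: "real^'b^'a \<Rightarrow> real^'a^'b \<Rightarrow> bool" where
  "MP A X \<longleftrightarrow> A ** X ** A = A \<and> X ** A ** X = X \<and>
                    transpose (A ** X) = A ** X \<and> transpose (X ** A) = X ** A"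

lemma MP_unique:
  assumes "MP A X" "MP A Y" shows "X = Y"
proof -
  from assms have a1: "A ** X ** A = A" and a2: "X ** A ** X = X"
    and a3: "transpose (A ** X) = A ** X" and a4: "transpose (X ** A) = X ** A"
    and b1: "A ** Y ** A = A" and b2: "Y ** A ** Y = Y"
    and b3: "transpose (A ** Y) = A ** Y" and b4: "transpose (Y ** A) = Y ** A"
    by (auto simp: MP_def)
  have c1: "X = X ** (transpose X ** transpose A)"
    by (metis a2 a3 matrix_mul_assoc matrix_transpose_mul)
  have c2: "transpose A = transpose A ** (A ** Y)"
    by (metis b1 b3 matrix_transpose_mul)
  have X: "X = X ** A ** Y"
    by (metis c1 c2 matrix_mul_assoc)
  have c3: "Y = (transpose A ** transpose Y) ** Y"
    by (metis b2 b4 matrix_transpose_mul)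
  have c4: "transpose A = (X ** A) ** transpose A"
    by (metis a1 a4 matrix_mul_assoc matrix_transpose_mul)
  have c5: "Y = X ** A ** (transpose A ** transpose Y) ** Y"
    by (metis c3 c4 matrix_mul_assoc)
  have "Y = X ** A ** Y"
    by (metis c5 b2 b4 matrix_mul_assoc matrix_transpose_mul)
  with X show ?thesis by simp
qed

lemma pinv_eq:
  assumes "MP A X" shows "pinv A = X"
proof -
  have "pinv A = (THE X. MP A X)" by (simp add: pinv_def MP_def)
  also have "\<dots> = X" using assms MP_unique by (intro the_equality) auto
  finally show ?thesis .
qed

lemma MP_exists_sym:
  fixes B :: "real^'n^'n"
  assumes symB: "transpose B = B"
  shows "\<exists>X. MP B X"
proof -
  define R where "R = range ((*v) B)"
  have sy: "\<And>v w. (B *v v) \<bullet> w = v \<bullet> (B *v w)" using sym_matD[OF symB] by blast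
  have subR: "subspace R" unfolding R_def
    by (intro linear_subspace_image matrix_vector_mul_linear subspace_UNIV)
  have kerR: "B *v v = 0" if "\<And>w. w \<in> R \<Longrightarrow> v \<bullet> w = 0" for v
  proof -
    have "(B *v v) \<bullet> (B *v v) = v \<bullet> (B *v (B *v v))" by (rule sy)
    also have "\<dots> = 0" using that[of "B *v (B *v v)"] by (simp add: R_def)
    finally show ?thesis by simp
  qed
  have inj: "inj_on ((*v) B) R"
  proof (rule inj_onI)
    fix a b assume ab: "a \<in> R" "b \<in> R" "B *v a = B *v b"
    then have dR: "a - b \<in> R" using subR by (simp add: subspace_diff)
    then obtain e where e: "a - b = B *v e" by (auto simp: R_def)
    have "B *v (a - b) = 0" using ab(3) by (simp add: matrix_vector_mult_diff_distrib)
    then have "(a - b) \<bullet> (a - b) = 0" using sy[of e "a - b"] e by simp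
    then show "a = b" by simp
  qed
  obtain g where gR: "range g \<subseteq> R" and lg: "linear g" and gl: "\<forall>v\<in>R. g (B *v v) = v"
    using linear_exists_left_inverse_on[OF matrix_vector_mul_linear subR inj] by blast
  have K3: "B *v (g z) = z" if zR: "z \<in> R" for z
  proof -
    obtain y where y: "z = B *v y" using zR by (auto simp: R_def)
    obtain y1 y2 where y12: "y1 \<in> span R" "\<And>w. w \<in> span R \<Longrightarrow> orthogonal y2 w" "y = y1 + y2"
      using orthogonal_subspace_decomp_exists by blast
    have spR: "span R = R" using subR by (simp add: span_eq_iff)
    have "B *v y2 = 0" using y12(2) spR by (intro kerR) (auto simp: orthogonal_def)
    then have "z = B *v y1" using y y12(3) by (simp add: matrix_vector_right_distrib)
    then show ?thesis using gl y12(1) spR by simp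
  qed
  have BR: "B *v v \<in> R" for v by (simp add: R_def)
  have gRR: "g v \<in> R" for v using gR by blast
  define P where "P v = g (B *v v)" for v
  have PR: "P v \<in> R" for v by (simp add: P_def gRR)
  have BP: "B *v P v = B *v v" for v by (simp add: P_def K3 BR)
  have Porth: "(v - P v) \<bullet> w = 0" if wR: "w \<in> R" for v w
  proof -
    obtain y where "w = B *v y" using wR by (auto simp: R_def)
    then have "(v - P v) \<bullet> w = (B *v (v - P v)) \<bullet> y" using sy by simp
    also have "\<dots> = 0" by (simp add: matrix_vector_mult_diff_distrib BP)
    finally show ?thesis .
  qed
  have Psym: "P v \<bullet> w = v \<bullet> P w" for v w
  proof -
    have "P v \<bullet> w = P v \<bullet> P w + P v \<bullet> (w - P w)" by (simp add: inner_diff_right)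
    also have "P v \<bullet> (w - P w) = 0" using Porth[OF PR, of w] by (simp add: inner_commute)
    also have "v \<bullet> P w = P v \<bullet> P w + (v - P v) \<bullet> P w" by (simp add: inner_diff_left)
    moreover have "(v - P v) \<bullet> P w = 0" using Porth[OF PR] by simp
    ultimately show ?thesis by simp
  qed
  define G where "G = matrix g"
  have Gg: "G *v v = g v" for v
    unfolding G_def using lg by (simp add: matrix_works linear_matrix_vector_mul_eq)
  define X where "X = G ** G ** B"
  have Xv: "X *v v = g (P v)" for v
    by (simp add: X_def P_def Gg flip: matrix_vector_mul_assoc)
  have 1: "(B ** X ** B) *v v = B *v v" for v
  proof -
    have "(B ** X ** B) *v v = B *v (X *v (B *v v))" by (simp add: matrix_vector_mul_assoc matrix_mul_assoc)
    also have "P (B *v v) = B *v v" unfolding P_def using gl BR by simp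
    then have "X *v (B *v v) = g (B *v v)" by (simp add: Xv)
    also have "g (B *v v) = P v" by (simp add: P_def)
    finally show ?thesis by (simp add: K3 PR BP)
  qed
  have 2: "(X ** B ** X) *v v = X *v v" for v
  proof -
    have "(X ** B ** X) *v v = X *v (B *v (X *v v))" by (simp add: matrix_vector_mul_assoc matrix_mul_assoc)
    also have "B *v (X *v v) = P v" by (simp add: Xv K3 PR)
    also have "P (P v) = P v" by (metis P_def BP)
    then have "X *v P v = g (P v)" using Xv[of "P v"] by simp
    finally show ?thesis by (simp add: Xv)
  qed
  have 3: "(B ** X) *v v = P v" for v
    by (simp add: Xv K3 PR flip: matrix_vector_mul_assoc)
  have 4: "(X ** B) *v v = P v" for v
  proof -
    have "(X ** B) *v v = g (P (B *v v))" by (simp add: Xv flip: matrix_vector_mul_assoc)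
    also have "P (B *v v) = B *v v" unfolding P_def using gl BR by simp
    finally show ?thesis by (simp add: P_def)
  qed
  have "MP B X" unfolding MP_def
  proof (intro conjI)
    show "B ** X ** B = B" using 1 by (simp add: matrix_eq)
    show "X ** B ** X = X" using 2 by (simp add: matrix_eq)
    show "transpose (B ** X) = B ** X" by (rule sym_matI) (simp add: 3 Psym)
    show "transpose (X ** B) = X ** B" by (rule sym_matI) (simp add: 4 Psym)
  qed
  then show ?thesis by blast
qed

lemma pinv_sym:
  fixes B :: "real^'n^'n"
  assumes symB: "transpose B = B"
  shows "MP B (pinv B) \<and> transpose (pinv B) = pinv B"
proof -
  obtain X where X: "MP B X" using MP_exists_sym[OF symB] by blast
  then have pX: "pinv B = X" by (rule pinv_eq)
  from X have a1: "B ** X ** B = B" and a2: "X ** B ** X = X"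
    and a3: "transpose (B ** X) = B ** X" and a4: "transpose (X ** B) = X ** B"
    by (auto simp: MP_def)
  have "MP B (transpose X)" unfolding MP_def
  proof (intro conjI)
    show "B ** transpose X ** B = B"
      using arg_cong[OF a1, of transpose] symB by (simp add: matrix_transpose_mul matrix_mul_assoc)
    show "transpose X ** B ** transpose X = transpose X"
      using arg_cong[OF a2, of transpose] symB by (simp add: matrix_transpose_mul matrix_mul_assoc)
    show "transpose (B ** transpose X) = B ** transpose X"
      using a4 symB by (simp add: matrix_transpose_mul)
    show "transpose (transpose X ** B) = transpose X ** B"
      using a3 symB by (simp add: matrix_transpose_mul)
  qed
  then have "transpose X = X" using X MP_unique by blast
  with X pX show ?thesis by simp
qed

lemma pinv_step:
  fixes B :: "real^'n^'n" and r :: "real^'n"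
  assumes symB: "transpose B = B" and psd: "\<And>v. v \<bullet> (B *v v) \<ge> 0"
  shows "r \<bullet> (pinv B *v r) \<ge> 0"
    and "r \<bullet> (- (pinv B *v r)) + (1/2) * ((pinv B *v r) \<bullet> (B *v (pinv B *v r)))
           = - (1/2) * (r \<bullet> (pinv B *v r))"
    and "(\<And>k. B *v k = 0 \<Longrightarrow> r \<bullet> k = 0) \<Longrightarrow>
           - (1/2) * (r \<bullet> (pinv B *v r)) \<le> r \<bullet> v + (1/2) * (v \<bullet> (B *v v))"
proof -
  define X where "X = pinv B"
  have MPX: "MP B X" and sX: "transpose X = X" using pinv_sym[OF symB] by (auto simp: X_def)
  from MPX have a1: "B ** X ** B = B" and a2: "X ** B ** X = X"
    and a3: "transpose (B ** X) = B ** X" and a4: "transpose (X ** B) = X ** B"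
    by (auto simp: MP_def)
  have syB: "\<And>v w. (B *v v) \<bullet> w = v \<bullet> (B *v w)" using sym_matD[OF symB] by blast
  have syX: "\<And>v w. (X *v v) \<bullet> w = v \<bullet> (X *v w)" using sym_matD[OF sX] by blast
  have XBX: "X *v (B *v (X *v r)) = X *v r"
    using a2 by (metis matrix_vector_mul_assoc)
  have e1: "r \<bullet> (X *v r) = (X *v r) \<bullet> (B *v (X *v r))"
  proof -
    have "r \<bullet> (X *v r) = r \<bullet> (X *v (B *v (X *v r)))" by (simp add: XBX)
    also have "\<dots> = (X *v r) \<bullet> (B *v (X *v r))" by (simp add: syX)
    finally show ?thesis .
  qed
  show "r \<bullet> (pinv B *v r) \<ge> 0" using e1 psd by (simp add: X_def[symmetric])
  show "r \<bullet> (- (pinv B *v r)) + (1/2) * ((pinv B *v r) \<bullet> (B *v (pinv B *v r)))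
           = - (1/2) * (r \<bullet> (pinv B *v r))" using e1 by (simp add: X_def[symmetric])
  assume ker: "\<And>k. B *v k = 0 \<Longrightarrow> r \<bullet> k = 0"
  define q where "q = r - B *v (X *v r)"
  have BX: "B ** X = X ** B" using a3 a4 symB sX by (simp add: matrix_transpose_mul)
  have "B *v (B *v (X *v r)) = (B ** X ** B) *v r"
    by (simp add: matrix_vector_mul_assoc BX matrix_mul_assoc)
  then have "B *v q = 0" using a1 by (simp add: q_def matrix_vector_mult_diff_distrib)
  then have rq: "r \<bullet> q = 0" by (rule ker)
  have "q \<bullet> q = r \<bullet> q - (B *v (X *v r)) \<bullet> q" by (simp add: q_def inner_diff_left)
  also have "(B *v (X *v r)) \<bullet> q = (X *v r) \<bullet> (B *v q)" by (rule syB)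
  finally have "q = 0" using rq \<open>B *v q = 0\<close> by simp
  then have rB: "r = B *v (X *v r)" by (simp add: q_def)
  define w where "w = X *v r"
  have "0 \<le> (v + w) \<bullet> (B *v (v + w))" by (rule psd)
  also have "\<dots> = v \<bullet> (B *v v) + 2 * (w \<bullet> (B *v v)) + w \<bullet> (B *v w)"
  proof -
    have "v \<bullet> (B *v w) = w \<bullet> (B *v v)" by (metis syB inner_commute)
    then show ?thesis by (simp add: matrix_vector_right_distrib inner_add_left inner_add_right)
  qed
  finally have ineq: "0 \<le> v \<bullet> (B *v v) + 2 * (w \<bullet> (B *v v)) + w \<bullet> (B *v w)" .
  have "r \<bullet> v = w \<bullet> (B *v v)" using rB syB by (metis w_def)
  moreover have "r \<bullet> (X *v r) = w \<bullet> (B *v w)" using e1 by (simp add: w_def)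
  ultimately show "- (1/2) * (r \<bullet> (pinv B *v r)) \<le> r \<bullet> v + (1/2) * (v \<bullet> (B *v v))"
    using ineq by (simp add: X_def[symmetric])
qed


declare transpose_matrix_vector[simp del]

lemma grad_eq:
  fixes f :: "'a::euclidean_space \<Rightarrow> real"
  assumes "(f has_derivative (\<lambda>h. g \<bullet> h)) (at x)"
  shows "grad f x = g"
  unfolding grad_def
proof (rule the_equality)
  show "(f has_derivative (\<lambda>h. g \<bullet> h)) (at x)" by (rule assms)
  fix g' assume "(f has_derivative (\<lambda>h. g' \<bullet> h)) (at x)"
  then have e: "(\<lambda>h. g' \<bullet> h) = (\<lambda>h. g \<bullet> h)" using has_derivative_unique assms by blast
  have "(g' - g) \<bullet> (g' - g) = 0"
    using fun_cong[OF e, of "g' - g"] by (simp add: inner_diff_left inner_diff_right inner_commute)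
  then show "g' = g" by simp
qed

lemma quad_deriv:
  fixes f :: "'a::real_normed_vector \<Rightarrow> real"
  assumes bl: "bounded_linear D" and C: "\<And>h. \<bar>f (x + h) - f x - D h\<bar> \<le> C * (norm h)^2"
  shows "(f has_derivative D) (at x)"
  unfolding has_derivative_at
proof (intro conjI bl)
  have "(\<lambda>h::'a. norm h) \<midarrow>0\<rightarrow> 0"
    using tendsto_norm_zero[OF tendsto_ident_at[of "0::'a" UNIV]] by simp
  then have "(\<lambda>h::'a. C * norm h) \<midarrow>0\<rightarrow> C * 0" by (intro tendsto_mult tendsto_const)
  then have lim: "(\<lambda>h::'a. C * norm h) \<midarrow>0\<rightarrow> 0" by simp
  show "(\<lambda>h. norm (f (x + h) - f x - D h) / norm h) \<midarrow>0\<rightarrow> 0"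
  proof (rule Lim_null_comparison[OF _ lim])
    have *: "norm (norm (f (x + h) - f x - D h) / norm h) \<le> C * norm h" if "h \<noteq> 0" for h
    proof -
      from that have hp: "norm h > 0" by simp
      have "norm (norm (f (x + h) - f x - D h) / norm h) = \<bar>f (x + h) - f x - D h\<bar> / norm h"
        by simp
      also have "\<dots> \<le> C * (norm h)^2 / norm h" using C hp by (intro divide_right_mono) auto
      also have "\<dots> = C * norm h" using hp by (simp add: power2_eq_square)
      finally show ?thesis .
    qed
    show "\<forall>\<^sub>F h in at 0. norm (norm (f (x + h) - f x - D h) / norm h) \<le> C * norm h"
      unfolding eventually_at using * by (auto intro!: exI[of _ 1])
  qed
qed

lemma descent:
  fixes \<Phi> :: "'a::euclidean_space \<Rightarrow> real"
  assumes der: "\<And>z. (\<Phi> has_derivative (\<lambda>h. G z \<bullet> h)) (at z)"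
    and lip: "\<And>z w. norm (G z - G w) \<le> L * norm (z - w)" and L: "L \<ge> 0"
  shows "\<Phi> (z + w) \<le> \<Phi> z + G z \<bullet> w + L / 2 * (norm w)^2"
proof -
  define \<phi> where "\<phi> t = \<Phi> (z + t *\<^sub>R w) - t * (G z \<bullet> w) - L / 2 * t^2 * (norm w)^2" for t
  have d: "DERIV \<phi> t :> G (z + t *\<^sub>R w) \<bullet> w - G z \<bullet> w - L * t * (norm w)^2" for t
  proof -
    have "((\<lambda>t. \<Phi> (z + t *\<^sub>R w)) has_derivative (\<lambda>h. G (z + t *\<^sub>R w) \<bullet> (h *\<^sub>R w))) (at t)"
      by (rule has_derivative_compose[of "\<lambda>t. z + t *\<^sub>R w", OF _ der])
         (auto intro!: derivative_eq_intros)
    moreover have "(\<lambda>h. G (z + t *\<^sub>R w) \<bullet> (h *\<^sub>R w)) = (*) (G (z + t *\<^sub>R w) \<bullet> w)"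
      by (rule ext) simp
    ultimately have "((\<lambda>t. \<Phi> (z + t *\<^sub>R w)) has_field_derivative G (z + t *\<^sub>R w) \<bullet> w) (at t)"
      unfolding has_field_derivative_def by simp
    then show ?thesis unfolding \<phi>_def
      by (auto intro!: derivative_eq_intros simp: power2_eq_square algebra_simps)
  qed
  have "\<phi> 1 \<le> \<phi> 0"
  proof (rule DERIV_nonpos_imp_nonincreasing[of 0 1])
    fix t :: real assume t: "0 \<le> t" "t \<le> 1"
    have "(G (z + t *\<^sub>R w) - G z) \<bullet> w \<le> norm (G (z + t *\<^sub>R w) - G z) * norm w"
      by (rule norm_cauchy_schwarz)
    also have "\<dots> \<le> L * norm (t *\<^sub>R w) * norm w"
      using lip[of "z + t *\<^sub>R w" z] by (intro mult_right_mono) auto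
    also have "\<dots> = L * t * (norm w)^2" using t by (simp add: power2_eq_square)
    finally show "\<exists>y. DERIV \<phi> t :> y \<and> y \<le> 0"
      using d[of t] by (intro exI[of _ "G (z + t *\<^sub>R w) \<bullet> w - G z \<bullet> w - L * t * (norm w)^2"])
        (auto simp: inner_diff_left)
  qed simp
  then show ?thesis by (simp add: \<phi>_def)
qed


lemma aux_ineq: "- D * X \<le> - a - - b \<Longrightarrow> a \<le> b + D * (X::real)"
  by (simp add: algebra_simps)

locale psiset =
  fixes \<psi> :: "nat \<Rightarrow> real \<Rightarrow> real" and S :: nat
  assumes A3ii: "\<forall>s\<in>{1..S}. \<forall>t. \<psi> s differentiable (at t)"
    and A3iii: "\<forall>s\<in>{1..S}. concave_on {0..} (\<lambda>t. \<psi> s (sqrt t))"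
    and A3iv: "\<forall>s\<in>{1..S}. (\<exists>\<omega>b \<ge> 0. \<forall>t>0. 0 \<le> deriv (\<psi> s) t \<and> deriv (\<psi> s) t \<le> \<omega>b * t)
                          \<and> (\<exists>l. ((\<lambda>t. deriv (\<psi> s) t / t) \<longlongrightarrow> l) (at 0))"
begin

definition Wb where
  "Wb s = (SOME \<omega>b. \<omega>b \<ge> 0 \<and> (\<forall>t>0. 0 \<le> deriv (\<psi> s) t \<and> deriv (\<psi> s) t \<le> \<omega>b * t))"

lemma Wb: assumes "s \<in> {1..S}"
  shows "Wb s \<ge> 0 \<and> (\<forall>t>0. 0 \<le> deriv (\<psi> s) t \<and> deriv (\<psi> s) t \<le> Wb s * t)"
proof -
  have ex: "\<exists>\<omega>b \<ge> 0. \<forall>t>0. 0 \<le> deriv (\<psi> s) t \<and> deriv (\<psi> s) t \<le> \<omega>b * t"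
    using bspec[OF A3iv assms] by (rule conjunct1)
  show ?thesis unfolding Wb_def by (rule someI_ex[OF ex])
qed

lemma dpsi: assumes "s \<in> {1..S}" shows "DERIV (\<psi> s) t :> deriv (\<psi> s) t"
  using A3ii assms DERIV_deriv_iff_real_differentiable by blast

lemma omega_lim: assumes "s \<in> {1..S}"
  shows "((\<lambda>t. deriv (\<psi> s) t / t) \<longlongrightarrow> omega \<psi> s 0) (at 0)"
proof -
  obtain l where l: "((\<lambda>t. deriv (\<psi> s) t / t) \<longlongrightarrow> l) (at 0)" using A3iv assms by blast
  then have "omega \<psi> s 0 = l" unfolding omega_def by (simp add: tendsto_Lim)
  with l show ?thesis by simp
qed

lemma omega_bounds: assumes s: "s \<in> {1..S}" and t: "t \<ge> 0"
  shows "0 \<le> omega \<psi> s t \<and> omega \<psi> s t \<le> Wb s"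
proof (cases "t = 0")
  case True
  have lim: "((\<lambda>t. deriv (\<psi> s) t / t) \<longlongrightarrow> omega \<psi> s 0) (at_right 0)"
    using omega_lim[OF s] by (rule tendsto_mono[OF at_within_le_at])
  have ev: "\<forall>\<^sub>F t in at_right 0. 0 \<le> deriv (\<psi> s) t / t \<and> deriv (\<psi> s) t / t \<le> Wb s"
    by (rule eventually_mono[OF eventually_at_right_less]) (use Wb[OF s] in \<open>auto simp: divide_le_eq\<close>)
  have "0 \<le> omega \<psi> s 0"
    by (rule tendsto_lowerbound[OF lim]) (use ev in \<open>auto elim: eventually_mono\<close>)
  moreover have "omega \<psi> s 0 \<le> Wb s"
    by (rule tendsto_upperbound[OF lim]) (use ev in \<open>auto elim: eventually_mono\<close>)
  ultimately show ?thesis using True by simp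
next
  case False
  then have "t > 0" using t by simp
  then show ?thesis using Wb[OF s] False by (auto simp: omega_def divide_le_eq)
qed

lemma tangent_pos: assumes s: "s \<in> {1..S}" and r: "r > 0" and r': "r' \<ge> 0"
  shows "\<psi> s r' \<le> \<psi> s r + omega \<psi> s r / 2 * (r'^2 - r^2)"
proof -
  have cv: "convex_on {0..} (\<lambda>t. - \<psi> s (sqrt t))"
    using A3iii s by (simp add: convex_on_iff_concave)
  have der: "((\<lambda>t. - \<psi> s (sqrt t)) has_field_derivative - (deriv (\<psi> s) (sqrt (r^2)) * (inverse (sqrt (r^2)) / 2)))
          (at (r^2) within {0..})"
  proof -
    have d1: "DERIV sqrt (r^2) :> inverse (sqrt (r^2)) / 2" using r by (intro DERIV_real_sqrt) simp
    have d2: "DERIV (\<lambda>t. \<psi> s (sqrt t)) (r^2) :> deriv (\<psi> s) (sqrt (r^2)) * (inverse (sqrt (r^2)) / 2)"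
      by (rule DERIV_chain2[OF dpsi[OF s] d1])
    show ?thesis by (rule has_field_derivative_at_within[OF DERIV_minus[OF d2]])
  qed
  have conn: "connected {0::real..}" by (simp add: is_interval_connected)
  have int: "r^2 \<in> interior {0::real..}" using r by simp
  have mem: "r'^2 \<in> {0::real..}" by simp
  have h: "(- \<psi> s (sqrt (r'^2))) - (- \<psi> s (sqrt (r^2)))
      \<ge> - (deriv (\<psi> s) (sqrt (r^2)) * (inverse (sqrt (r^2)) / 2)) * (r'^2 - r^2)"
    using convex_on_imp_above_tangent[OF cv conn int mem der] by simp
  have sq: "sqrt (r^2) = r" "sqrt (r'^2) = r'" using r r' by auto
  from h[unfolded sq] have "\<psi> s r' \<le> \<psi> s r + (deriv (\<psi> s) r * (inverse r / 2)) * (r'^2 - r^2)"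
    by (rule aux_ineq)
  moreover have om: "omega \<psi> s r = deriv (\<psi> s) r / r"
    using r by (simp add: omega_def)
  then have E: "deriv (\<psi> s) r * (inverse r / 2) = omega \<psi> s r / 2"
    by (simp add: field_simps)
  ultimately show ?thesis by (simp only: E)
qed

lemma tangent: assumes s: "s \<in> {1..S}" and r: "r \<ge> 0" and r': "r' \<ge> 0"
  shows "\<psi> s r' \<le> \<psi> s r + omega \<psi> s r / 2 * (r'^2 - r^2)"
proof (cases "r > 0")
  case True then show ?thesis using tangent_pos s r' by blast
next
  case False
  then have r0: "r = 0" using r by simp
  have cont: "isCont (\<psi> s) 0" using dpsi[OF s] by (rule DERIV_isCont)
  have l1: "((\<lambda>u. deriv (\<psi> s) u / u) \<longlongrightarrow> omega \<psi> s 0) (at_right 0)"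
    using omega_lim[OF s] by (rule tendsto_mono[OF at_within_le_at])
  have l2: "(\<psi> s \<longlongrightarrow> \<psi> s 0) (at_right 0)"
    using cont unfolding isCont_def by (rule tendsto_mono[OF at_within_le_at])
  have l3: "((\<lambda>u::real. u^2) \<longlongrightarrow> 0) (at_right 0)"
    using tendsto_power[OF tendsto_ident_at[of "0::real" "{0<..}"], of 2] by simp
  have lim: "((\<lambda>u. \<psi> s u + deriv (\<psi> s) u / u / 2 * (r'^2 - u^2)) \<longlongrightarrow> \<psi> s 0 + omega \<psi> s 0 / 2 * (r'^2 - 0))
      (at_right 0)"
    by (rule tendsto_add[OF l2 tendsto_mult[OF tendsto_divide[OF l1 tendsto_const] tendsto_diff[OF tendsto_const l3]]]) simp
  have ev: "\<forall>\<^sub>F u in at_right 0. \<psi> s r' \<le> \<psi> s u + deriv (\<psi> s) u / u / 2 * (r'^2 - u^2)"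
  proof (rule eventually_mono[OF eventually_at_right_less])
    fix u :: real assume u: "0 < u"
    have "omega \<psi> s u = deriv (\<psi> s) u / u" using u by (simp add: omega_def)
    with tangent_pos[OF s u r'] show "\<psi> s r' \<le> \<psi> s u + deriv (\<psi> s) u / u / 2 * (r'^2 - u^2)"
      by simp
  qed
  have "\<psi> s r' \<le> \<psi> s 0 + omega \<psi> s 0 / 2 * (r'^2 - 0)"
    by (rule tendsto_le[OF _ lim tendsto_const ev]) simp
  then show ?thesis using r0 by (simp only: r0 power_zero_numeral diff_zero)
qed

lemma mono0: assumes s: "s \<in> {1..S}" and r: "r \<ge> 0" shows "\<psi> s 0 \<le> \<psi> s r"
proof (cases "r = 0")
  case False
  then have "r > 0" using r by simp
  from MVT2[OF this dpsi[OF s]] obtain z where z: "0 < z" "z < r" "\<psi> s r - \<psi> s 0 = (r - 0) * deriv (\<psi> s) z"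
    by blast
  have "deriv (\<psi> s) z \<ge> 0" using Wb[OF s] z by auto
  then have "r * deriv (\<psi> s) z \<ge> 0" using r by simp
  then show ?thesis using z by simp
qed simp

end


declare transpose_matrix_vector[simp del]

lemma diagm_mv: "diagm b *v u = (\<chi> i. b $ i * u $ i)"
proof -
  have "(\<Sum>j\<in>UNIV. (if i = j then b $ i else 0) * u $ j) = b $ i * u $ i" for i
  proof -
    have "(\<Sum>j\<in>UNIV. (if i = j then b $ i else 0) * u $ j) = (\<Sum>j\<in>UNIV. if i = j then b $ i * u $ j else 0)"
      by (intro sum.cong refl) simp
    then show ?thesis by simp
  qed
  then show ?thesis by (simp add: diagm_def matrix_vector_mult_def vec_eq_iff)
qed

locale setting = psiset \<psi> S
  for \<psi> :: "nat \<Rightarrow> real \<Rightarrow> real" and S :: nat +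
  fixes \<Phi> :: "real^'q \<Rightarrow> real" and H :: "real^'n^'q" and y :: "real^'q"
    and grp :: "'p::finite \<Rightarrow> nat"
    and V :: "real^'n^'p" and c :: "real^'p" and V0 :: "real^'n^'r"
    and L \<mu> :: real and G :: "real^'q \<Rightarrow> real^'q"
  assumes grp_range: "\<forall>i. grp i \<in> {1..S}"
    and L_pos: "L > 0"
    and G_der: "\<And>z. (\<Phi> has_derivative (\<lambda>h. G z \<bullet> h)) (at z)"
    and G_lip: "\<And>z w. norm (G z - G w) \<le> L * norm (z - w)"
    and mu_ge: "\<mu> \<ge> L"
begin

definition ms :: "nat \<Rightarrow> real^'p \<Rightarrow> real^'p" where
  "ms s z = (\<chi> i. if grp i = s then z $ i else 0)"

definition zz where "zz x = V *v x - c"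

definition bb where "bb x = (\<chi> i. omega \<psi> (grp i) (blk_norm grp (grp i) (zz x)))"

definition Wmax where "Wmax = (\<Sum>s\<in>{1..S}. Wb s)"

lemma blk_ms: "blk_norm grp s z = norm (ms s z)"
proof -
  have "(\<Sum>i\<in>UNIV. (ms s z $ i) * (ms s z $ i)) = (\<Sum>i\<in>UNIV. if grp i = s then (z $ i)^2 else 0)"
    by (intro sum.cong refl) (simp add: ms_def power2_eq_square)
  also have "\<dots> = (\<Sum>i\<in>{i. grp i = s}. (z $ i)^2)"
    using sum.inter_filter[of UNIV "\<lambda>i. (z $ i)^2" "\<lambda>i. grp i = s"] by simp
  finally have "(\<Sum>i\<in>UNIV. (ms s z $ i) * (ms s z $ i)) = (\<Sum>i\<in>{i. grp i = s}. (z $ i)^2)" .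
  then show ?thesis
    by (simp add: blk_norm_def norm_eq_sqrt_inner inner_vec_def)
qed

lemma ms_inner: "ms s z \<bullet> w = (\<Sum>i\<in>UNIV. if grp i = s then z $ i * w $ i else 0)"
  unfolding inner_vec_def by (intro sum.cong refl) (simp add: ms_def)

lemma ms_add: "ms s (a + b) = ms s a + ms s b"
  by (simp add: ms_def vec_eq_iff)

lemma ms_ms: "ms s z \<bullet> ms s w = ms s z \<bullet> w"
  unfolding inner_vec_def by (intro sum.cong refl) (simp add: ms_def)

lemma sum_blocks:
  "(\<Sum>s\<in>{1..S}. a s * (ms s z \<bullet> w)) = (\<Sum>i\<in>UNIV. a (grp i) * (z $ i * w $ i))"
proof -
  have "(\<Sum>s\<in>{1..S}. a s * (ms s z \<bullet> w))
      = (\<Sum>s\<in>{1..S}. \<Sum>i\<in>UNIV. if grp i = s then a s * (z $ i * w $ i) else 0)"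
    by (simp add: ms_inner sum_distrib_left if_distrib cong: if_cong)
  also have "\<dots> = (\<Sum>i\<in>UNIV. \<Sum>s\<in>{1..S}. if grp i = s then a s * (z $ i * w $ i) else 0)"
    by (rule sum.swap)
  also have "\<dots> = (\<Sum>i\<in>UNIV. a (grp i) * (z $ i * w $ i))"
    using grp_range by (intro sum.cong refl) (simp add: sum.delta)
  finally show ?thesis .
qed

lemma bb_bounds: "0 \<le> bb x $ i \<and> bb x $ i \<le> Wmax"
proof -
  have g: "grp i \<in> {1..S}" using grp_range by blast
  have "0 \<le> blk_norm grp (grp i) (zz x)" by (simp add: blk_ms)
  then have o: "0 \<le> bb x $ i \<and> bb x $ i \<le> Wb (grp i)"
    using omega_bounds[OF g] by (simp add: bb_def)
  have "Wb (grp i) \<le> Wmax" unfolding Wmax_def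
    using g Wb by (intro member_le_sum) auto
  with o show ?thesis by simp
qed

lemma AA_bilin:
  "(Amat \<mu> H V0 \<psi> grp V c x *v v) \<bullet> w
    = \<mu> * ((H *v v) \<bullet> (H *v w)) + 2 * ((V0 *v v) \<bullet> (V0 *v w))
      + (\<Sum>i\<in>UNIV. bb x $ i * ((V *v v) $ i * (V *v w) $ i))"
proof -
  have d: "diagm (\<chi> i. omega \<psi> (grp i) (blk_norm grp (grp i) (V *v x - c)))
     = diagm (bb x)" by (simp add: bb_def zz_def)
  have 3: "(diagm (bb x) *v (V *v v)) \<bullet> (V *v w) = (\<Sum>i\<in>UNIV. bb x $ i * ((V *v v) $ i * (V *v w) $ i))"
    by (simp add: diagm_mv inner_vec_def mult.assoc)
  show ?thesis unfolding Amat_def d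
    by (simp add: matrix_vector_mult_add_rdistrib inner_add_left 3 tmv_inner
        flip: scaleR_matrix_vector_assoc matrix_vector_mul_assoc)
qed

lemma AA_sym: "transpose (Amat \<mu> H V0 \<psi> grp V c x) = Amat \<mu> H V0 \<psi> grp V c x"
proof (rule sym_matI)
  fix v w
  have 1: "(Amat \<mu> H V0 \<psi> grp V c x *v v) \<bullet> w = \<mu> * ((H *v v) \<bullet> (H *v w)) + 2 * ((V0 *v v) \<bullet> (V0 *v w))
      + (\<Sum>i\<in>UNIV. bb x $ i * ((V *v v) $ i * (V *v w) $ i))" by (rule AA_bilin)
  have 2: "(Amat \<mu> H V0 \<psi> grp V c x *v w) \<bullet> v = \<mu> * ((H *v w) \<bullet> (H *v v)) + 2 * ((V0 *v w) \<bullet> (V0 *v v))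
      + (\<Sum>i\<in>UNIV. bb x $ i * ((V *v w) $ i * (V *v v) $ i))" by (rule AA_bilin)
  have 3: "v \<bullet> (Amat \<mu> H V0 \<psi> grp V c x *v w) = (Amat \<mu> H V0 \<psi> grp V c x *v w) \<bullet> v"
    by (rule inner_commute)
  show "(Amat \<mu> H V0 \<psi> grp V c x *v v) \<bullet> w = v \<bullet> (Amat \<mu> H V0 \<psi> grp V c x *v w)"
    unfolding 3 1 2 by (simp add: inner_commute mult.commute)
qed

lemma AA_psd: "(Amat \<mu> H V0 \<psi> grp V c x *v v) \<bullet> v \<ge> 0"
proof -
  have "0 \<le> (\<Sum>i\<in>UNIV. bb x $ i * ((V *v v) $ i * (V *v v) $ i))"
    using bb_bounds by (intro sum_nonneg) simp
  moreover have "0 \<le> \<mu>" using mu_ge L_pos by simp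
  ultimately show ?thesis unfolding AA_bilin by simp
qed

lemma mv_bound: "\<exists>K>0. \<forall>v. norm ((M::real^'a^'b) *v v) \<le> K * norm v"
  using bounded_linear.pos_bounded[OF matrix_vector_mul_bounded_linear[of M]]
  by (metis mult.commute)

lemma AA_bound: "\<exists>\<nu>>0. \<forall>x v. (Amat \<mu> H V0 \<psi> grp V c x *v v) \<bullet> v \<le> \<nu> * (norm v)^2"
proof -
  obtain K1 where K1: "K1 > 0" "\<And>v. norm (H *v v) \<le> K1 * norm v" using mv_bound by blast
  obtain K2 where K2: "K2 > 0" "\<And>v. norm (V0 *v v) \<le> K2 * norm v" using mv_bound by blast
  obtain K3 where K3: "K3 > 0" "\<And>v. norm (V *v v) \<le> K3 * norm v" using mv_bound by blast
  have W0: "Wmax \<ge> 0" using bb_bounds[of undefined undefined] by linarith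
  have mu0: "\<mu> \<ge> 0" using mu_ge L_pos by simp
  define \<nu> where "\<nu> = \<mu> * K1^2 + 2 * K2^2 + Wmax * K3^2 + 1"
  have sq: "(norm (M *v v))^2 \<le> K^2 * (norm v)^2" if "\<And>v. norm (M *v v) \<le> K * norm v"
    for M :: "real^'n^'z" and K v
  proof -
    have "(norm (M *v v))^2 \<le> (K * norm v)^2" using that[of v] by (intro power_mono) auto
    then show ?thesis by (simp add: power_mult_distrib)
  qed
  have "(Amat \<mu> H V0 \<psi> grp V c x *v v) \<bullet> v \<le> \<nu> * (norm v)^2" for x v
  proof -
    have t1: "\<mu> * ((H *v v) \<bullet> (H *v v)) \<le> \<mu> * (K1^2 * (norm v)^2)"
      using sq[OF K1(2)] mu0 by (intro mult_left_mono) (auto simp: power2_norm_eq_inner)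
    have t2: "2 * ((V0 *v v) \<bullet> (V0 *v v)) \<le> 2 * (K2^2 * (norm v)^2)"
      using sq[OF K2(2)] by (auto simp: power2_norm_eq_inner)
    have "(\<Sum>i\<in>UNIV. bb x $ i * ((V *v v) $ i * (V *v v) $ i))
        \<le> (\<Sum>i\<in>UNIV. Wmax * ((V *v v) $ i * (V *v v) $ i))"
      using bb_bounds by (intro sum_mono mult_right_mono) auto
    also have "\<dots> = Wmax * ((V *v v) \<bullet> (V *v v))" by (simp add: inner_vec_def sum_distrib_left)
    also have "\<dots> \<le> Wmax * (K3^2 * (norm v)^2)"
      using sq[OF K3(2)] W0 by (intro mult_left_mono) (auto simp: power2_norm_eq_inner)
    finally have t3: "(\<Sum>i\<in>UNIV. bb x $ i * ((V *v v) $ i * (V *v v) $ i)) \<le> Wmax * (K3^2 * (norm v)^2)" .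
    have "(Amat \<mu> H V0 \<psi> grp V c x *v v) \<bullet> v \<le> \<mu> * (K1^2 * (norm v)^2) + 2 * (K2^2 * (norm v)^2)
        + Wmax * (K3^2 * (norm v)^2)"
      unfolding AA_bilin using t1 t2 t3 by linarith
    also have "\<dots> \<le> \<nu> * (norm v)^2" by (simp add: \<nu>_def algebra_simps)
    finally show ?thesis .
  qed
  moreover have "\<nu> > 0" unfolding \<nu>_def using mu0 W0
    by (intro add_nonneg_pos add_nonneg_nonneg mult_nonneg_nonneg) auto
  ultimately show ?thesis by blast
qed

definition gr where
  "gr x = transpose H *v G (H *v x - y) + transpose V *v (\<chi> i. bb x $ i * zz x $ i)
          + 2 *\<^sub>R (transpose V0 *v (V0 *v x))"

lemma gr_inner: "gr x \<bullet> h = G (H *v x - y) \<bullet> (H *v h)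
   + (\<Sum>i\<in>UNIV. bb x $ i * (zz x $ i * (V *v h) $ i)) + 2 * ((V0 *v x) \<bullet> (V0 *v h))"
proof -
  have m: "(\<chi> i. bb x $ i * zz x $ i) \<bullet> (V *v h) = (\<Sum>i\<in>UNIV. bb x $ i * (zz x $ i * (V *v h) $ i))"
    by (simp add: inner_vec_def mult.assoc)
  show ?thesis by (simp add: gr_def inner_add_left tmv_inner m)
qed

lemma AA_ker:
  assumes "(Amat \<mu> H V0 \<psi> grp V c x *v v) \<bullet> v = 0"
  shows "gr x \<bullet> v = 0"
proof -
  have mu0: "\<mu> > 0" using mu_ge L_pos by simp
  have s0: "0 \<le> (\<Sum>i\<in>UNIV. bb x $ i * ((V *v v) $ i * (V *v v) $ i))"
    using bb_bounds by (intro sum_nonneg) simp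
  have a: "0 \<le> (H *v v) \<bullet> (H *v v)" "0 \<le> (V0 *v v) \<bullet> (V0 *v v)" by auto
  have e: "\<mu> * ((H *v v) \<bullet> (H *v v)) + 2 * ((V0 *v v) \<bullet> (V0 *v v))
      + (\<Sum>i\<in>UNIV. bb x $ i * ((V *v v) $ i * (V *v v) $ i)) = 0"
    using assms unfolding AA_bilin .
  have "\<mu> * ((H *v v) \<bullet> (H *v v)) \<ge> 0" using mu0 a by simp
  then have hz: "\<mu> * ((H *v v) \<bullet> (H *v v)) = 0" and vz: "(V0 *v v) \<bullet> (V0 *v v) = 0"
    and sz: "(\<Sum>i\<in>UNIV. bb x $ i * ((V *v v) $ i * (V *v v) $ i)) = 0"
    using e s0 a by linarith+
  from hz mu0 have H0: "H *v v = 0" by simp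
  from vz have V00: "V0 *v v = 0" by simp
  have "\<forall>i\<in>UNIV. bb x $ i * ((V *v v) $ i * (V *v v) $ i) = 0"
    using sz bb_bounds by (subst sum_nonneg_eq_0_iff[symmetric]) auto
  then have "bb x $ i = 0 \<or> (V *v v) $ i = 0" for i
    by simp
  then have p0: "bb x $ i * (V *v v) $ i = 0" for i
    by (metis mult_eq_0_iff)
  have t0: "bb x $ i * (zz x $ i * (V *v v) $ i) = 0" for i
    using p0[of i] by (simp add: mult.left_commute[of "bb x $ i"])
  have "(\<Sum>i\<in>UNIV. bb x $ i * (zz x $ i * (V *v v) $ i)) = 0"
    by (rule sum.neutral) (use t0 in blast)
  then show ?thesis by (simp add: gr_inner H0 V00)
qed

end


declare transpose_matrix_vector[simp del]

context setting
begin

lemma ms_lin: "bounded_linear (ms s)"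
proof -
  have "linear (ms s)"
    by (rule linearI) (simp_all add: ms_def vec_eq_iff)
  then show ?thesis by (simp add: linear_conv_bounded_linear)
qed

lemma ms_norm_le: "norm (ms s z) \<le> norm z"
proof -
  have "ms s z \<bullet> ms s z \<le> z \<bullet> z"
    unfolding inner_vec_def by (intro sum_mono) (simp add: ms_def)
  then show ?thesis by (simp add: norm_le)
qed

lemma zz_der: "(zz has_derivative (\<lambda>h. V *v h)) (at x)"
proof -
  have "((\<lambda>x. V *v x - c) has_derivative (\<lambda>h. V *v h - 0)) (at x)"
    by (intro has_derivative_diff bounded_linear_imp_has_derivative matrix_vector_mul_bounded_linear
        has_derivative_const)
  then show ?thesis by (simp add: zz_def[abs_def])
qed

lemma T_deriv:
  assumes s: "s \<in> {1..S}"
  shows "((\<lambda>x. \<psi> s (blk_norm grp s (zz x))) has_derivative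
           (\<lambda>h. omega \<psi> s (norm (ms s (zz x))) * (ms s (zz x) \<bullet> (V *v h)))) (at x)"
proof (cases "ms s (zz x) = 0")
  case False
  define w where "w = ms s (zz x)"
  define r where "r = norm w"
  have rpos: "r > 0" using False by (simp add: w_def r_def)
  have d1: "((\<lambda>x. ms s (zz x)) has_derivative (\<lambda>h. ms s (V *v h))) (at x)"
    by (rule bounded_linear.has_derivative[OF ms_lin zz_der])
  have d2: "(norm has_derivative (\<lambda>h. h \<bullet> sgn w)) (at (ms s (zz x)))"
    using has_derivative_norm[of w] False by (simp add: w_def)
  have d12: "((\<lambda>x. norm (ms s (zz x))) has_derivative (\<lambda>h. ms s (V *v h) \<bullet> sgn w)) (at x)"
    by (rule has_derivative_compose[OF d1 d2])
  have d3: "(\<psi> s has_derivative (\<lambda>h. deriv (\<psi> s) r * h)) (at (norm (ms s (zz x))))"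
    using dpsi[OF s, of r] by (simp add: has_field_derivative_def r_def w_def)
  have d: "((\<lambda>x. \<psi> s (norm (ms s (zz x)))) has_derivative
      (\<lambda>h. deriv (\<psi> s) r * (ms s (V *v h) \<bullet> sgn w))) (at x)"
    by (rule has_derivative_compose[OF d12 d3])
  have eq: "deriv (\<psi> s) r * (ms s (V *v h) \<bullet> sgn w)
      = omega \<psi> s (norm (ms s (zz x))) * (ms s (zz x) \<bullet> (V *v h))" for h
  proof -
    have mm: "ms s (V *v h) \<bullet> w = w \<bullet> (V *v h)"
      unfolding w_def by (metis inner_commute ms_ms)
    have "ms s (V *v h) \<bullet> sgn w = (ms s (V *v h) \<bullet> w) / r"
      by (simp add: sgn_div_norm r_def divide_inverse mult.commute)
    then have "ms s (V *v h) \<bullet> sgn w = (w \<bullet> (V *v h)) / r" using mm by simp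
    moreover have "omega \<psi> s (norm (ms s (zz x))) = deriv (\<psi> s) r / r"
      using rpos by (simp add: omega_def r_def w_def)
    ultimately show ?thesis by (simp add: w_def)
  qed
  show ?thesis using d unfolding eq blk_ms .
next
  case True
  obtain K where K: "K > 0" "\<And>v. norm (V *v v) \<le> K * norm v" using mv_bound by blast
  have Wb0: "0 \<le> Wb s" using Wb[OF s] by simp
  have z: "(\<lambda>h. omega \<psi> s (norm (ms s (zz x))) * (ms s (zz x) \<bullet> (V *v h))) = (\<lambda>h. 0)"
    using True by simp
  have "((\<lambda>x. \<psi> s (blk_norm grp s (zz x))) has_derivative (\<lambda>h. 0)) (at x)"
  proof (rule quad_deriv[OF bounded_linear_zero])
    fix h
    have zh: "zz (x + h) = zz x + V *v h" by (simp add: zz_def matrix_vector_right_distrib)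
    define r' where "r' = norm (ms s (V *v h))"
    have r'0: "r' \<ge> 0" by (simp add: r'_def)
    have blk: "blk_norm grp s (zz (x + h)) = r'" "blk_norm grp s (zz x) = 0"
      using True by (simp_all add: blk_ms zh ms_add r'_def)
    have up: "\<psi> s r' \<le> \<psi> s 0 + omega \<psi> s 0 / 2 * (r'^2 - 0^2)"
      using tangent[OF s order.refl r'0] .
    have om: "omega \<psi> s 0 \<le> Wb s" using omega_bounds[OF s order.refl] by simp
    have lo: "\<psi> s 0 \<le> \<psi> s r'" using mono0[OF s r'0] .
    have r'K: "r' \<le> K * norm h" using ms_norm_le[of s "V *v h"] K(2)[of h] by (simp add: r'_def)
    have r'2: "r'^2 \<le> (K * norm h)^2" using r'K r'0 by (intro power_mono) auto
    have "\<psi> s r' - \<psi> s 0 \<le> Wb s / 2 * r'^2"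
    proof -
      have "omega \<psi> s 0 / 2 * r'^2 \<le> Wb s / 2 * r'^2" using om by (intro mult_right_mono) auto
      then show ?thesis using up by simp
    qed
    also have "\<dots> \<le> Wb s / 2 * (K * norm h)^2" using r'2 Wb0 by (intro mult_left_mono) auto
    finally have "\<bar>\<psi> s r' - \<psi> s 0\<bar> \<le> (Wb s / 2 * K^2) * (norm h)^2"
      using lo by (simp add: power_mult_distrib)
    then show "\<bar>\<psi> s (blk_norm grp s (zz (x + h))) - \<psi> s (blk_norm grp s (zz x)) - 0\<bar>
        \<le> (Wb s / 2 * K^2) * (norm h)^2" by (simp add: blk)
  qed
  then show ?thesis unfolding z .
qed

lemma ms_swap: "ms s a \<bullet> b = ms s b \<bullet> a"
  by (metis ms_ms inner_commute)

lemma bb_om: "bb x $ i = omega \<psi> (grp i) (norm (ms (grp i) (zz x)))"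
  by (simp add: bb_def blk_ms)

lemma Fd_eq: "Fdelta \<Phi> H y \<psi> S grp V c V0 = (\<lambda>x. \<Phi> (H *v x - y)
    + (\<Sum>s\<in>{1..S}. \<psi> s (blk_norm grp s (zz x))) + (V0 *v x) \<bullet> (V0 *v x))"
  by (rule ext) (simp add: Fdelta_def zz_def power2_norm_eq_inner)

lemma F_deriv: "(Fdelta \<Phi> H y \<psi> S grp V c V0 has_derivative (\<lambda>h. gr x \<bullet> h)) (at x)"
proof -
  have dl: "((\<lambda>x. H *v x - y) has_derivative (\<lambda>h. H *v h - 0)) (at x)"
    by (intro has_derivative_diff bounded_linear_imp_has_derivative matrix_vector_mul_bounded_linear
        has_derivative_const)
  have dP: "((\<lambda>x. \<Phi> (H *v x - y)) has_derivative (\<lambda>h. G (H *v x - y) \<bullet> (H *v h - 0))) (at x)"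
    by (rule has_derivative_compose[OF dl G_der])
  have dT: "((\<lambda>x. \<Sum>s\<in>{1..S}. \<psi> s (blk_norm grp s (zz x))) has_derivative
      (\<lambda>h. \<Sum>s\<in>{1..S}. omega \<psi> s (norm (ms s (zz x))) * (ms s (zz x) \<bullet> (V *v h)))) (at x)"
    by (rule has_derivative_sum) (rule T_deriv)
  have dV: "((\<lambda>x. V0 *v x) has_derivative (\<lambda>h. V0 *v h)) (at x)"
    by (intro bounded_linear_imp_has_derivative matrix_vector_mul_bounded_linear)
  have dN: "((\<lambda>x. (V0 *v x) \<bullet> (V0 *v x)) has_derivative
      (\<lambda>h. (V0 *v x) \<bullet> (V0 *v h) + (V0 *v h) \<bullet> (V0 *v x))) (at x)"
    by (rule has_derivative_inner[OF dV dV])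
  have d: "(Fdelta \<Phi> H y \<psi> S grp V c V0 has_derivative (\<lambda>h. G (H *v x - y) \<bullet> (H *v h - 0)
      + (\<Sum>s\<in>{1..S}. omega \<psi> s (norm (ms s (zz x))) * (ms s (zz x) \<bullet> (V *v h)))
      + ((V0 *v x) \<bullet> (V0 *v h) + (V0 *v h) \<bullet> (V0 *v x)))) (at x)"
    unfolding Fd_eq by (intro has_derivative_add dP dT dN)
  have eq: "G (H *v x - y) \<bullet> (H *v h - 0)
      + (\<Sum>s\<in>{1..S}. omega \<psi> s (norm (ms s (zz x))) * (ms s (zz x) \<bullet> (V *v h)))
      + ((V0 *v x) \<bullet> (V0 *v h) + (V0 *v h) \<bullet> (V0 *v x)) = gr x \<bullet> h" for h
    unfolding gr_inner sum_blocks bb_om by (simp add: inner_commute)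
  show ?thesis using d unfolding eq .
qed

lemma grad_F: "grad (Fdelta \<Phi> H y \<psi> S grp V c V0) x = gr x"
  by (rule grad_eq[OF F_deriv])

lemma F_major: "Fdelta \<Phi> H y \<psi> S grp V c V0 (x + h)
   \<le> Fdelta \<Phi> H y \<psi> S grp V c V0 x + gr x \<bullet> h + 1/2 * ((Amat \<mu> H V0 \<psi> grp V c x *v h) \<bullet> h)"
proof -
  define z where "z = zz x"
  define w where "w = V *v h"
  have zh: "zz (x + h) = z + w" by (simp add: zz_def z_def w_def matrix_vector_right_distrib)
  have P: "\<Phi> (H *v (x + h) - y) \<le> \<Phi> (H *v x - y) + G (H *v x - y) \<bullet> (H *v h)
      + \<mu> / 2 * ((H *v h) \<bullet> (H *v h))"
  proof -
    have e: "H *v (x + h) - y = (H *v x - y) + H *v h" by (simp add: matrix_vector_right_distrib)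
    have "\<Phi> (H *v (x + h) - y) \<le> \<Phi> (H *v x - y) + G (H *v x - y) \<bullet> (H *v h) + L / 2 * (norm (H *v h))^2"
      unfolding e using L_pos by (intro descent[OF G_der G_lip]) simp
    moreover have "L / 2 * (norm (H *v h))^2 \<le> \<mu> / 2 * (norm (H *v h))^2"
      using mu_ge by (intro mult_right_mono) auto
    ultimately show ?thesis by (simp add: power2_norm_eq_inner)
  qed
  have Tb: "\<psi> s (blk_norm grp s (zz (x + h))) \<le> \<psi> s (blk_norm grp s (zz x))
      + omega \<psi> s (norm (ms s z)) * (ms s z \<bullet> w) + omega \<psi> s (norm (ms s z)) / 2 * (ms s w \<bullet> w)"
    if s: "s \<in> {1..S}" for s
  proof -
    have t: "\<psi> s (norm (ms s (z + w))) \<le> \<psi> s (norm (ms s z))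
        + omega \<psi> s (norm (ms s z)) / 2 * ((norm (ms s (z + w)))^2 - (norm (ms s z))^2)"
      by (rule tangent[OF s]) auto
    have e2: "(norm (ms s (z + w)))^2 - (norm (ms s z))^2 = 2 * (ms s z \<bullet> w) + ms s w \<bullet> w"
      unfolding ms_add power2_norm_eq_inner
      by (simp add: inner_add_left inner_add_right ms_ms inner_commute[of "ms s w" "ms s z"] ms_swap[of s w z])
    have "\<psi> s (norm (ms s (z + w))) \<le> \<psi> s (norm (ms s z))
      + omega \<psi> s (norm (ms s z)) * (ms s z \<bullet> w) + omega \<psi> s (norm (ms s z)) / 2 * (ms s w \<bullet> w)"
      using t unfolding e2 by (simp add: algebra_simps)
    then show ?thesis unfolding blk_ms zh by (simp only: z_def)
  qed
  have T: "(\<Sum>s\<in>{1..S}. \<psi> s (blk_norm grp s (zz (x + h)))) \<le> (\<Sum>s\<in>{1..S}. \<psi> s (blk_norm grp s (zz x)))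
      + (\<Sum>i\<in>UNIV. bb x $ i * (z $ i * w $ i)) + 1/2 * (\<Sum>i\<in>UNIV. bb x $ i * (w $ i * w $ i))"
  proof -
    have "(\<Sum>s\<in>{1..S}. \<psi> s (blk_norm grp s (zz (x + h)))) \<le> (\<Sum>s\<in>{1..S}. \<psi> s (blk_norm grp s (zz x))
      + omega \<psi> s (norm (ms s z)) * (ms s z \<bullet> w) + omega \<psi> s (norm (ms s z)) / 2 * (ms s w \<bullet> w))"
      by (rule sum_mono) (rule Tb)
    also have "\<dots> = (\<Sum>s\<in>{1..S}. \<psi> s (blk_norm grp s (zz x)))
      + (\<Sum>s\<in>{1..S}. omega \<psi> s (norm (ms s z)) * (ms s z \<bullet> w))
      + (\<Sum>s\<in>{1..S}. omega \<psi> s (norm (ms s z)) / 2 * (ms s w \<bullet> w))"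
      by (simp add: sum.distrib)
    also have "(\<Sum>s\<in>{1..S}. omega \<psi> s (norm (ms s z)) * (ms s z \<bullet> w)) = (\<Sum>i\<in>UNIV. bb x $ i * (z $ i * w $ i))"
      unfolding sum_blocks bb_om z_def ..
    also have "(\<Sum>s\<in>{1..S}. omega \<psi> s (norm (ms s z)) / 2 * (ms s w \<bullet> w))
        = (\<Sum>i\<in>UNIV. omega \<psi> (grp i) (norm (ms (grp i) z)) / 2 * (w $ i * w $ i))"
      by (rule sum_blocks)
    also have "\<dots> = 1/2 * (\<Sum>i\<in>UNIV. bb x $ i * (w $ i * w $ i))"
      by (simp add: sum_distrib_left bb_om z_def)
    finally show ?thesis .
  qed
  have N: "(V0 *v (x + h)) \<bullet> (V0 *v (x + h)) = (V0 *v x) \<bullet> (V0 *v x) + 2 * ((V0 *v x) \<bullet> (V0 *v h))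
      + (V0 *v h) \<bullet> (V0 *v h)"
    by (simp add: matrix_vector_right_distrib inner_add_left inner_add_right inner_commute)
  have A: "1/2 * ((Amat \<mu> H V0 \<psi> grp V c x *v h) \<bullet> h) = \<mu> / 2 * ((H *v h) \<bullet> (H *v h))
      + (V0 *v h) \<bullet> (V0 *v h) + 1/2 * (\<Sum>i\<in>UNIV. bb x $ i * (w $ i * w $ i))"
    unfolding AA_bilin w_def by (simp add: algebra_simps)
  have g: "gr x \<bullet> h = G (H *v x - y) \<bullet> (H *v h)
   + (\<Sum>i\<in>UNIV. bb x $ i * (z $ i * w $ i)) + 2 * ((V0 *v x) \<bullet> (V0 *v h))"
    unfolding gr_inner z_def w_def ..
  show ?thesis unfolding Fd_eq using P T N A g by linarith
qed

end


declare transpose_matrix_vector[simp del]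

lemma tmv_inner2: "v \<bullet> (transpose M *v a) = a \<bullet> ((M::real^'n^'m) *v v)"
  by (metis inner_commute tmv_inner)

lemma Bquad_gen: "v \<bullet> ((transpose Dm ** A ** Dm) *v v) = (A *v (Dm *v v)) \<bullet> (Dm *v v)"
  for A :: "real^'n^'n" and Dm :: "real^'m^'n"
proof -
  have "(transpose Dm ** A ** Dm) *v v = transpose Dm *v (A *v (Dm *v v))"
    by (simp add: matrix_vector_mul_assoc matrix_mul_assoc)
  then show ?thesis by (simp add: tmv_inner2)
qed

theorem lemma2:
  fixes \<Phi> :: "real^'q \<Rightarrow> real" and H :: "real^'n^'q" and y :: "real^'q"
    and \<psi> :: "nat \<Rightarrow> real \<Rightarrow> real" and S J :: nat and grp :: "'p::finite \<Rightarrow> nat"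
    and V :: "real^'n^'p" and c :: "real^'p" and V0 :: "real^'n^'r"
    and L \<mu> \<gamma>0 \<gamma>1 :: real
    and x :: "nat \<Rightarrow> real^'n" and D :: "nat \<Rightarrow> real^'m^'n" and u :: "nat \<Rightarrow> nat \<Rightarrow> real^'m"
    and i0 :: 'm
  assumes S_pos: "S \<ge> 1" and J_pos: "J \<ge> 1"
    and M_le_N: "CARD('m) \<le> CARD('n)"
    and H_nz: "H \<noteq> 0"
    and grp_range: "\<forall>i. grp i \<in> {1..S}"
    and blocks_nonempty: "\<forall>s\<in>{1..S}. \<exists>i. grp i = s"
    and L_pos: "L > 0"
    and A3i: "\<exists>G. (\<forall>z. (\<Phi> has_derivative (\<lambda>h. G z \<bullet> h)) (at z))
                 \<and> (\<forall>z w. norm (G z - G w) \<le> L * norm (z - w))"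
    and A3ii: "\<forall>s\<in>{1..S}. \<forall>t. \<psi> s differentiable (at t)"
    and A3iii: "\<forall>s\<in>{1..S}. concave_on {0..} (\<lambda>t. \<psi> s (sqrt t))"
    and A3iv: "\<forall>s\<in>{1..S}. (\<exists>\<omega>b \<ge> 0. \<forall>t>0. 0 \<le> deriv (\<psi> s) t \<and> deriv (\<psi> s) t \<le> \<omega>b * t)
                          \<and> (\<exists>l. ((\<lambda>t. deriv (\<psi> s) t / t) \<longlongrightarrow> l) (at 0))"
    and mu_ge: "\<mu> \<ge> L"
    and u0: "\<forall>k. u k 0 = 0"
    and u_step: "\<forall>k j. j < J \<longrightarrow>
        u k (Suc j) = u k j
          - pinv (transpose (D k) ** Amat \<mu> H V0 \<psi> grp V c (x k + D k *v u k j) ** D k)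
            *v (transpose (D k) *v grad (Fdelta \<Phi> H y \<psi> S grp V c V0) (x k + D k *v u k j))"
    and x_step: "\<forall>k. x (Suc k) = x k + D k *v u k J"
    and gamma_pos: "\<gamma>0 > 0" "\<gamma>1 > 0"
    and A4: "\<forall>k. grad (Fdelta \<Phi> H y \<psi> S grp V c V0) (x k) \<bullet> column i0 (D k)
                   \<le> - \<gamma>0 * (norm (grad (Fdelta \<Phi> H y \<psi> S grp V c V0) (x k)))^2
               \<and> norm (column i0 (D k)) \<le> \<gamma>1 * norm (grad (Fdelta \<Phi> H y \<psi> S grp V c V0) (x k))"
  shows "\<exists>\<nu>>0. \<forall>k. \<forall>j\<in>{1..J}.
           Fdelta \<Phi> H y \<psi> S grp V c V0 (x k) - Fdelta \<Phi> H y \<psi> S grp V c V0 (x k + D k *v u k j)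
             \<ge> \<gamma>0^2 / \<gamma>1 * inverse \<nu> * (norm (grad (Fdelta \<Phi> H y \<psi> S grp V c V0) (x k)))^2"
proof -
  obtain G where Gd: "\<forall>z. (\<Phi> has_derivative (\<lambda>h. G z \<bullet> h)) (at z)"
    and Gl: "\<forall>z w. norm (G z - G w) \<le> L * norm (z - w)" using A3i by blast
  interpret st: setting \<psi> S \<Phi> H y grp V c V0 L \<mu> G
    by unfold_locales (use A3ii A3iii A3iv grp_range L_pos Gd Gl mu_ge in auto)
  let ?F = "Fdelta \<Phi> H y \<psi> S grp V c V0"
  let ?A = "Amat \<mu> H V0 \<psi> grp V c"
  obtain \<nu>0 where nu0: "\<nu>0 > 0" "\<And>x v. (?A x *v v) \<bullet> v \<le> \<nu>0 * (norm v)^2"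
    using st.AA_bound by blast
  define \<nu> where "\<nu> = 2 * \<nu>0 * \<gamma>1"
  have nupos: "\<nu> > 0" using nu0 gamma_pos by (simp add: \<nu>_def)
  define c0 where "c0 = \<gamma>0^2 / (2 * \<nu>0 * \<gamma>1^2)"
  have c0eq: "\<gamma>0^2 / \<gamma>1 * inverse \<nu> = c0"
    using nu0 gamma_pos by (simp add: c0_def \<nu>_def field_simps power2_eq_square)
  have model: "?F (p + Dm *v v) \<le> ?F p + (transpose Dm *v st.gr p) \<bullet> v
      + 1/2 * (v \<bullet> ((transpose Dm ** ?A p ** Dm) *v v))" for p :: "real^'n" and Dm :: "real^'m^'n" and v
  proof -
    have "?F (p + Dm *v v) \<le> ?F p + st.gr p \<bullet> (Dm *v v) + 1/2 * ((?A p *v (Dm *v v)) \<bullet> (Dm *v v))"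
      by (rule st.F_major)
    moreover have "st.gr p \<bullet> (Dm *v v) = (transpose Dm *v st.gr p) \<bullet> v" by (simp add: tmv_inner)
    moreover have "v \<bullet> ((transpose Dm ** ?A p ** Dm) *v v) = (?A p *v (Dm *v v)) \<bullet> (Dm *v v)"
      by (rule Bquad_gen)
    ultimately show ?thesis by simp
  qed
  have Bsym: "transpose (transpose Dm ** ?A p ** Dm) = transpose Dm ** ?A p ** Dm"
    for p :: "real^'n" and Dm :: "real^'m^'n"
    by (simp add: matrix_transpose_mul st.AA_sym matrix_mul_assoc)
  have Bquad: "v \<bullet> ((transpose Dm ** ?A p ** Dm) *v v) = (?A p *v (Dm *v v)) \<bullet> (Dm *v v)"
    for p :: "real^'n" and Dm :: "real^'m^'n" and v
    by (rule Bquad_gen)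
  have Bpsd: "v \<bullet> ((transpose Dm ** ?A p ** Dm) *v v) \<ge> 0"
    for p :: "real^'n" and Dm :: "real^'m^'n" and v
    unfolding Bquad by (rule st.AA_psd)
  have Bpsd': "(v::real^'m) \<bullet> ((transpose Dm ** ?A p ** Dm) *v v) \<ge> 0"
    for p :: "real^'n" and Dm :: "real^'m^'n" and v
    using Bpsd .
  have Bker: "(transpose Dm *v st.gr p) \<bullet> k = 0" if "(transpose Dm ** ?A p ** Dm) *v k = 0"
    for p :: "real^'n" and Dm :: "real^'m^'n" and k
  proof -
    have "(?A p *v (Dm *v k)) \<bullet> (Dm *v k) = 0" using that Bquad[of k Dm p] by simp
    then have "st.gr p \<bullet> (Dm *v k) = 0" by (rule st.AA_ker)
    then show ?thesis by (simp add: tmv_inner)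
  qed
  have step: "?F (x k + D k *v u k (Suc j)) \<le> ?F (x k + D k *v u k j)" if "j < J" for k j
  proof -
    define p where "p = x k + D k *v u k j"
    define B where "B = transpose (D k) ** ?A p ** D k"
    define r where "r = transpose (D k) *v st.gr p"
    have us: "u k (Suc j) = u k j - pinv B *v r"
      using u_step that by (simp add: B_def r_def p_def st.grad_F)
    have e: "x k + D k *v u k (Suc j) = p + D k *v (- (pinv B *v r))"
      by (simp add: us p_def vec.neg vec.diff)
    have Bs: "transpose B = B" unfolding B_def by (rule Bsym)
    have Bp: "\<And>v. v \<bullet> (B *v v) \<ge> 0" unfolding B_def by (rule Bpsd')
    have m: "?F (x k + D k *v u k (Suc j)) \<le> ?F p + r \<bullet> (- (pinv B *v r))
        + 1/2 * ((- (pinv B *v r)) \<bullet> (B *v (- (pinv B *v r))))"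
      unfolding e r_def B_def by (rule model)
    have eq: "r \<bullet> (- (pinv B *v r)) + 1/2 * ((- (pinv B *v r)) \<bullet> (B *v (- (pinv B *v r))))
        = - (1/2) * (r \<bullet> (pinv B *v r))"
      using pinv_step(2)[OF Bs Bp, of r] by (simp add: vec.neg)
    have nn: "r \<bullet> (pinv B *v r) \<ge> 0" using pinv_step(1)[OF Bs Bp, of r] by simp
    have "?F (x k + D k *v u k (Suc j)) \<le> ?F p" using m eq nn by linarith
    then show ?thesis by (simp add: p_def)
  qed
  have first: "?F (x k + D k *v u k 1) \<le> ?F (x k) - c0 * (norm (st.gr (x k)))^2" for k
  proof -
    define p where "p = x k"
    have u0k: "u k 0 = 0" using u0 by simp
    define B where "B = transpose (D k) ** ?A p ** D k"
    define r where "r = transpose (D k) *v st.gr p"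
    have us: "u k 1 = - (pinv B *v r)"
      using u_step J_pos u0k by (simp add: B_def r_def p_def st.grad_F)
    have e: "x k + D k *v u k 1 = p + D k *v (- (pinv B *v r))"
      unfolding us p_def by (rule refl)
    have Bs: "transpose B = B" unfolding B_def by (rule Bsym)
    have Bp: "\<And>v. v \<bullet> (B *v v) \<ge> 0" unfolding B_def by (rule Bpsd')
    have Bk: "\<And>kk. B *v kk = 0 \<Longrightarrow> r \<bullet> kk = 0" unfolding B_def r_def by (rule Bker)
    have F1: "?F (x k + D k *v u k 1) \<le> ?F p - (1/2) * (r \<bullet> (pinv B *v r))"
    proof -
      have m: "?F (x k + D k *v u k 1) \<le> ?F p + r \<bullet> (- (pinv B *v r))
          + 1/2 * ((- (pinv B *v r)) \<bullet> (B *v (- (pinv B *v r))))"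
        unfolding e r_def B_def by (rule model)
      have eq: "r \<bullet> (- (pinv B *v r)) + 1/2 * ((- (pinv B *v r)) \<bullet> (B *v (- (pinv B *v r))))
          = - (1/2) * (r \<bullet> (pinv B *v r))"
        using pinv_step(2)[OF Bs Bp, of r] by (simp add: vec.neg)
      show ?thesis using m eq by linarith
    qed
    define d1 where "d1 = column i0 (D k)"
    define g where "g = st.gr p"
    define t where "t = \<gamma>0 / (\<nu>0 * \<gamma>1^2)"
    define v where "v = t *\<^sub>R axis i0 (1::real)"
    have "D k *v v = t *\<^sub>R (D k *v axis i0 1)"
      by (simp add: v_def scaleR_matrix_vector_assoc matrix_scaleR_vector_ac)
    then have Dv: "D k *v v = t *\<^sub>R d1"
      by (simp add: d1_def matrix_vector_mult_basis)
    have rv: "r \<bullet> v = t * (g \<bullet> d1)" by (simp add: r_def tmv_inner Dv g_def)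
    have vBv: "v \<bullet> (B *v v) \<le> t^2 * (\<nu>0 * (norm d1)^2)"
    proof -
      have "v \<bullet> (B *v v) = (?A p *v (t *\<^sub>R d1)) \<bullet> (t *\<^sub>R d1)" unfolding B_def Bquad Dv ..
      also have "?A p *v (t *\<^sub>R d1) = t *\<^sub>R (?A p *v d1)"
        by (simp add: scaleR_matrix_vector_assoc matrix_scaleR_vector_ac)
      also have "(t *\<^sub>R (?A p *v d1)) \<bullet> (t *\<^sub>R d1) = t^2 * ((?A p *v d1) \<bullet> d1)"
        by (simp add: power2_eq_square)
      also have "\<dots> \<le> t^2 * (\<nu>0 * (norm d1)^2)" by (intro mult_left_mono nu0(2)) auto
      finally show ?thesis .
    qed
    have "- (1/2) * (r \<bullet> (pinv B *v r)) \<le> r \<bullet> v + (1/2) * (v \<bullet> (B *v v))"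
      by (rule pinv_step(3)[OF Bs Bp Bk])
    also have "\<dots> \<le> t * (g \<bullet> d1) + 1/2 * (t^2 * (\<nu>0 * (norm d1)^2))" using rv vBv by simp
    also have "\<dots> \<le> - c0 * (norm g)^2"
    proof -
      have a: "g \<bullet> d1 \<le> - \<gamma>0 * (norm g)^2" and n: "norm d1 \<le> \<gamma>1 * norm g"
        using A4 by (auto simp: g_def d1_def p_def st.grad_F)
      have n2: "(norm d1)^2 \<le> \<gamma>1^2 * (norm g)^2"
        using n by (metis norm_ge_zero power_mono power_mult_distrib)
      have tpos: "t > 0" using gamma_pos nu0 by (simp add: t_def)
      have "t * (g \<bullet> d1) \<le> t * (- \<gamma>0 * (norm g)^2)" using a tpos by (intro mult_left_mono) auto
      moreover have "1/2 * (t^2 * (\<nu>0 * (norm d1)^2)) \<le> 1/2 * (t^2 * (\<nu>0 * (\<gamma>1^2 * (norm g)^2)))"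
        using n2 nu0 by (intro mult_left_mono) auto
      moreover have "t * (- \<gamma>0 * (norm g)^2) + 1/2 * (t^2 * (\<nu>0 * (\<gamma>1^2 * (norm g)^2)))
          = - c0 * (norm g)^2"
        using gamma_pos nu0 by (simp add: t_def c0_def field_simps power2_eq_square)
      ultimately show ?thesis by linarith
    qed
    finally have "- (1/2) * (r \<bullet> (pinv B *v r)) \<le> - c0 * (norm g)^2" .
    then show ?thesis using F1 by (simp add: p_def g_def)
  qed
  have main: "?F (x k + D k *v u k j) \<le> ?F (x k) - c0 * (norm (st.gr (x k)))^2"
    if "1 \<le> j" "j \<le> J" for k j
    using that
  proof (induction j)
    case 0 then show ?case by simp
  next
    case (Suc j)
    show ?case
    proof (cases "j = 0")
      case True then show ?thesis using first by simp
    next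
      case False
      then have "?F (x k + D k *v u k j) \<le> ?F (x k) - c0 * (norm (st.gr (x k)))^2"
        using Suc by simp
      moreover have "?F (x k + D k *v u k (Suc j)) \<le> ?F (x k + D k *v u k j)"
        using Suc by (intro step) simp
      ultimately show ?thesis by linarith
    qed
  qed
  show ?thesis
  proof (intro exI[of _ \<nu>] conjI allI ballI nupos)
    fix k j assume "j \<in> {1..J}"
    show "?F (x k) - ?F (x k + D k *v u k j)
        \<ge> \<gamma>0^2 / \<gamma>1 * inverse \<nu> * (norm (grad ?F (x k)))^2"
    proof -
      have m: "?F (x k + D k *v u k j) \<le> ?F (x k) - c0 * (norm (st.gr (x k)))^2"
        using main[of j k] \<open>j \<in> {1..J}\<close> by simp
      have "\<gamma>0^2 / \<gamma>1 * inverse \<nu> * (norm (st.gr (x k)))^2 = c0 * (norm (st.gr (x k)))^2"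
        by (simp only: c0eq)
      then show ?thesis using m by (simp add: st.grad_F)
    qed
  qed
qed


end
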